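(* Let $m\in\mathbb{Z}_2$ with $v_2(m)$ odd, and $f(x)=x^2+(-1-4m)x$ on $\mathbb{Z}_2$. Then $f$ has the two fixed points $0$ and $4m+2$, $f(1+2\mathbb{Z}_2)\subset 2\mathbb{Z}_2$, and $$2\mathbb{Z}_2=\{0,4m+2\}\sqcup E_1\sqcup E_2\sqcup E_3,$$ where $$E_1=\bigsqcup_{n\ge4}\big(4m+2+2^{n-2}+2^{n-1}\mathbb{Z}_2\big)-\{\text{II-}[1]\},$$ $$E_2=\bigsqcup_{4\le n\le\lfloor v_2(m)/2\rfloor+3}\big(2^{n-2}+2^{n-1}\mathbb{Z}_2\big)-\{\text{II-}[2n-5]\},$$ $$E_3=\bigsqcup_{n>\lfloor v_2(m)/2\rfloor+3}\big(2^{n-2}+2^{n-1}\mathbb{Z}_2\big)-\{\text{II-}[v_2(m)+1]\}.$$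
   Context: $v_2$ is the $2$-adic valuation. For $n\ge1$, $f_n$ is the induced map on $\mathbb{Z}/2^n\mathbb{Z}$, $f_n(x\bmod 2^n)=f(x)\bmod 2^n$. A cycle of $f_n$ (at level $n$) of length $k$ is a tuple $\sigma=(x_1,\dots,x_k)$ of distinct elements with $f_n(x_i)=x_{i+1}$, $f_n(x_k)=x_1$. The set $X_\sigma=\{y\in\mathbb{Z}/2^{n+1}\mathbb{Z}:y\bmod 2^n\in\sigma\}$ is $f_{n+1}$-invariant; its cycles are the lifts of $\sigma$. $\sigma$ grows if $X_\sigma$ is a single cycle of length $2k$ and splits if it is a union of two cycles of length $k$. For $k\ge0$, "$\sigma$ splits $k$ times and then its lifts grow forever" means every cycle at levels $n,\dots,n+k-1$ lying above $\sigma$ (reducing mod $2^n$ into $\sigma$) splits, and every cycle at every level $\ge n+k$ lying above $\sigma$ grows. A set $F=(x+2^n\mathbb{Z}_2)\cup(y+2^n\mathbb{Z}_2)$ with $(x\bmod 2^n,y\bmod 2^n)$ a 2-cycle of $f_n$ is of type II-$[k]$ if this 2-cycle splits $k$ times and then its lifts grow forever (then $F$ is the disjoint union of $2^k$ clopen invariant sets, each a union of two balls of radius $2^{-n-k}$, on each of which $f$ is minimal). The notation $E=\bigsqcup_{n\in J}F_n-\{\text{II-}[k]\}$ means $E$ is the disjoint union of the sets $F_n$, each of type II-$[k]$ (with $k$ possibly depending on $n$ as indicated). *)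

theory Defs
  imports Main
begin

typedef z2 = "{a :: nat \<Rightarrow> int. \<forall>n. 0 \<le> a n \<and> a n < 2 ^ n \<and> a (Suc n) mod 2 ^ n = a n}"
  by (rule exI[of _ "\<lambda>_. 0"]) simp

definition res :: "nat \<Rightarrow> z2 \<Rightarrow> int" where
  "res n x = Rep_z2 x n"

definition z2 :: "int \<Rightarrow> z2" where
  "z2 k = Abs_z2 (\<lambda>n. k mod 2 ^ n)"

instantiation z2 :: "{zero, one, plus, minus, uminus, times}"
begin
definition "0 = z2 0"
definition "1 = z2 1"
definition "x + y = Abs_z2 (\<lambda>n. (res n x + res n y) mod 2 ^ n)"
definition "x - y = Abs_z2 (\<lambda>n. (res n x - res n y) mod 2 ^ n)"
definition "- x = Abs_z2 (\<lambda>n. (- res n x) mod 2 ^ n)"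
definition "x * y = Abs_z2 (\<lambda>n. (res n x * res n y) mod 2 ^ n)"
instance ..
end

text \<open>2-adic valuation (for nonzero x): v_2(x) = k iff 2^k divides x but 2^(k+1) does not.\<close>
definition v2 :: "z2 \<Rightarrow> nat" where
  "v2 x = (LEAST k. res (Suc k) x \<noteq> 0)"

definition zball :: "z2 \<Rightarrow> nat \<Rightarrow> z2 set" where
  "zball a n = {y. res n y = res n a}"

text \<open>f_n on Z/2^n Z (residues represented by integers in [0,2^n)).\<close>
definition ind :: "(z2 \<Rightarrow> z2) \<Rightarrow> nat \<Rightarrow> int \<Rightarrow> int" where
  "ind f n r = res n (f (z2 r))"

definition is_cycle :: "(z2 \<Rightarrow> z2) \<Rightarrow> nat \<Rightarrow> int list \<Rightarrow> bool" where
  "is_cycle f n xs \<longleftrightarrow> xs \<noteq> [] \<and> distinct xs \<and> set xs \<subseteq> {0..<2 ^ n} \<and>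
     (\<forall>i<length xs. ind f n (xs ! i) = xs ! (Suc i mod length xs))"

definition liftset :: "nat \<Rightarrow> int list \<Rightarrow> int set" where
  "liftset n xs = {y. 0 \<le> y \<and> y < 2 ^ Suc n \<and> y mod 2 ^ n \<in> set xs}"

definition grows :: "(z2 \<Rightarrow> z2) \<Rightarrow> nat \<Rightarrow> int list \<Rightarrow> bool" where
  "grows f n xs \<longleftrightarrow> (\<exists>t. is_cycle f (Suc n) t \<and> length t = 2 * length xs \<and> set t = liftset n xs)"

definition splits :: "(z2 \<Rightarrow> z2) \<Rightarrow> nat \<Rightarrow> int list \<Rightarrow> bool" where
  "splits f n xs \<longleftrightarrow> (\<exists>t1 t2. is_cycle f (Suc n) t1 \<and> is_cycle f (Suc n) t2 \<and>
      length t1 = length xs \<and> length t2 = length xs \<and>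
      set t1 \<inter> set t2 = {} \<and> set t1 \<union> set t2 = liftset n xs)"

definition above :: "nat \<Rightarrow> int list \<Rightarrow> nat \<Rightarrow> int list \<Rightarrow> bool" where
  "above n xs l t \<longleftrightarrow> n \<le> l \<and> (\<forall>y\<in>set t. y mod 2 ^ n \<in> set xs)"

definition splits_then_grows :: "(z2 \<Rightarrow> z2) \<Rightarrow> nat \<Rightarrow> int list \<Rightarrow> nat \<Rightarrow> bool" where
  "splits_then_grows f n xs k \<longleftrightarrow>
     (\<forall>l t. n \<le> l \<and> l < n + k \<and> is_cycle f l t \<and> above n xs l t \<longrightarrow> splits f l t) \<and>
     (\<forall>l t. n + k \<le> l \<and> is_cycle f l t \<and> above n xs l t \<longrightarrow> grows f l t)"

definition typeII :: "(z2 \<Rightarrow> z2) \<Rightarrow> z2 set \<Rightarrow> nat \<Rightarrow> bool" where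
  "typeII f F k \<longleftrightarrow> (\<exists>N x y. 1 \<le> N \<and> F = zball x N \<union> zball y N \<and>
      is_cycle f N [res N x, res N y] \<and> splits_then_grows f N [res N x, res N y] k)"

end

theory Submission imports Defs "HOL-Computational_Algebra.Primes"
begin

lemma res_props: "0 \<le> res n x \<and> res n x < 2^n \<and> res (Suc n) x mod 2^n = res n x"
  using Rep_z2[of x] by (auto simp: res_def)

lemma res_ge0[simp]: "0 \<le> res n x" using res_props by blast
lemma res_lt[simp]: "res n x < 2^n" using res_props by blast
lemma res_mod[simp]: "res n x mod 2^n = res n x" by simp
lemma res_Suc: "res (Suc n) x mod 2^n = res n x" using res_props by blast

lemma res_le: "n \<le> k \<Longrightarrow> res k x mod 2^n = res n x"
proof (induction k)
  case 0
  have "res 0 x = 0" using res_props[of 0 x] by simp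
  then show ?case using 0 by simp
next
  case (Suc k)
  show ?case
  proof (cases "n = Suc k")
    case True then show ?thesis by (metis res_mod)
  next
    case False
    then have "n \<le> k" using Suc by simp
    have "(2::int)^n dvd 2^k" using \<open>n \<le> k\<close> by (rule le_imp_power_dvd)
    then have "res (Suc k) x mod 2^n = res (Suc k) x mod 2^k mod 2^n"
      by (simp add: mod_mod_cancel)
    also have "\<dots> = res n x" using res_Suc Suc.IH \<open>n \<le> k\<close> by simp
    finally show ?thesis .
  qed
qed

lemma z2_eq_iff: "x = y \<longleftrightarrow> (\<forall>n. res n x = res n y)"
  by (metis Rep_z2_inject ext res_def)

lemma res_Abs:
  assumes "\<And>n. s (Suc n) mod 2^n = s n mod (2::int)^n"
  shows "res n (Abs_z2 (\<lambda>n. s n mod 2^n)) = s n mod 2^n"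
proof -
  have "(\<lambda>n. s n mod 2^n) \<in> {a :: nat \<Rightarrow> int. \<forall>n. 0 \<le> a n \<and> a n < 2 ^ n \<and> a (Suc n) mod 2 ^ n = a n}"
  proof (safe)
    fix n
    show "0 \<le> s n mod 2^n" by simp
    show "s n mod 2^n < 2^n" by simp
    have "(2::int)^n dvd 2^Suc n" by (rule le_imp_power_dvd) simp
    then show "s (Suc n) mod 2 ^ Suc n mod 2 ^ n = s n mod 2 ^ n"
      using assms by (simp add: mod_mod_cancel)
  qed
  then show ?thesis by (simp add: res_def Abs_z2_inverse)
qed

lemma res_z2: "res n (z2 k) = k mod 2^n"
  unfolding z2_def by (rule res_Abs) simp

lemma res_add: "res n (x + y) = (res n x + res n y) mod 2^n"
  unfolding plus_z2_def
  by (rule res_Abs) (metis mod_add_eq res_Suc)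

lemma res_diff: "res n (x - y) = (res n x - res n y) mod 2^n"
  unfolding minus_z2_def
  by (rule res_Abs) (metis mod_diff_eq res_Suc)

lemma res_mult: "res n (x * y) = (res n x * res n y) mod 2^n"
  unfolding times_z2_def
  by (rule res_Abs) (metis mod_mult_eq res_Suc)

lemma res_zero[simp]: "res n 0 = 0"
  unfolding zero_z2_def res_z2 by simp

definition Fm :: "int \<Rightarrow> int \<Rightarrow> int" where "Fm M x = x*x - (1 + 4*M)*x"
definition ex :: "nat \<Rightarrow> int \<Rightarrow> bool" where "ex a z \<longleftrightarrow> (\<exists>u. odd u \<and> z = 2^a * u)"

lemma ex_dvd: "ex a z \<Longrightarrow> 2^a dvd z" unfolding ex_def by auto

lemma ex_ndvd: assumes "ex a z" "a < b" shows "\<not> (2::int)^b dvd z"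
proof
  assume d: "(2::int)^b dvd z"
  obtain u where u: "odd u" "z = 2^a*u" using assms(1) ex_def by auto
  have "(2::int)^Suc a dvd 2^b" using assms(2) by (intro le_imp_power_dvd) simp
  then have "2^Suc a dvd 2^a*u" using d u by (meson dvd_trans)
  then have "2 dvd u" by simp
  then show False using u by simp
qed

lemma ex_mult: assumes "ex a x" "ex b y" shows "ex (a+b) (x*y)"
proof -
  obtain u where u: "odd u" "x = 2^a*u" using assms(1) ex_def by auto
  obtain w where w: "odd w" "y = 2^b*w" using assms(2) ex_def by auto
  have "x*y = 2^(a+b) * (u*w)" using u w by (simp add: power_add algebra_simps)
  moreover have "odd (u*w)" using u w by simp
  ultimately show ?thesis unfolding ex_def by blast
qed

lemma ex_add: assumes "ex a x" "2^Suc a dvd y" shows "ex a (x+y)"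
proof -
  obtain u where u: "odd u" "x = 2^a*u" using assms(1) ex_def by auto
  obtain w where w: "y = 2^Suc a * w" using assms(2) by auto
  have "x + y = 2^a * (u + 2*w)" using u w by (simp add: algebra_simps)
  moreover have "odd (u + 2*w)" using u by simp
  ultimately show ?thesis unfolding ex_def by blast
qed

lemma ex_minus: assumes "ex a x" shows "ex a (-x)"
proof -
  obtain u where u: "odd u" "x = 2^a*u" using assms(1) ex_def by auto
  then have "-x = 2^a*(-u)" by simp
  then show ?thesis unfolding ex_def using u by (metis even_minus)
qed

lemma ex_mod: assumes "z mod 2^Suc a = 2^a" shows "ex a z"
proof -
  have "z = 2^Suc a * (z div 2^Suc a) + 2^a" using assms by (metis mult_div_mod_eq)
  then have "z = 2^a * (2 * (z div 2^Suc a) + 1)" by (simp add: algebra_simps)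
  then show ?thesis unfolding ex_def by (intro exI[of _ "2 * (z div 2 ^ Suc a) + 1"]) simp
qed

lemma ex_one: "ex 0 z \<longleftrightarrow> odd z" unfolding ex_def by simp

lemma Fm_shift: "Fm M (x + q*k) = Fm M x + (k*(2*x + q*k) - (1+4*M)*k) * q"
  unfolding Fm_def by (simp add: algebra_simps)

lemma Fm_mod: "Fm M (x mod q) mod q = Fm M x mod q"
proof -
  have "x = x mod q + q*(x div q)" by simp
  then have "Fm M x = Fm M (x mod q) + ((x div q)*(2*(x mod q) + q*(x div q)) - (1+4*M)*(x div q)) * q"
    by (metis Fm_shift)
  then show ?thesis by (metis mod_mult_self1)
qed

lemma Fm_iter_mod: "(Fm M ^^ i) (x mod q) mod q = (Fm M ^^ i) x mod q"
proof (induction i)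
  case 0 then show ?case by simp
next
  case (Suc i)
  have "(Fm M ^^ Suc i) (x mod q) mod q = Fm M ((Fm M ^^ i) (x mod q)) mod q" by simp
  also have "\<dots> = Fm M ((Fm M ^^ i) (x mod q) mod q) mod q" by (simp add: Fm_mod)
  also have "\<dots> = Fm M ((Fm M ^^ i) x mod q) mod q" using Suc by simp
  also have "\<dots> = (Fm M ^^ Suc i) x mod q" by (simp add: Fm_mod)
  finally show ?case .
qed

lemma Fm_iter_cong: "x mod q = y mod q \<Longrightarrow> (Fm M ^^ i) x mod q = (Fm M ^^ i) y mod q"
  using Fm_iter_mod[of i M x q] Fm_iter_mod[of i M y q] by simp

lemma Fm_even: "even x \<Longrightarrow> even (Fm M x)" unfolding Fm_def by simp

lemma Fm_iter_even: "even x \<Longrightarrow> even ((Fm M ^^ i) x)"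
  by (induction i) (auto simp: Fm_even)

lemma Fm_step: assumes "even x" "4 dvd h"
  shows "\<exists>u. Fm M (x+h) - Fm M x = h*u \<and> u mod 4 = 3"
proof -
  have e: "Fm M (x+h) - Fm M x = h*(2*x + h - 1 - 4*M)" unfolding Fm_def by (simp add: algebra_simps)
  obtain a where a: "x = 2*a" using assms(1) by auto
  obtain b where b: "h = 4*b" using assms(2) by auto
  have eq: "(2*x + h - 1 - 4*M) = 3 + (a + b - M - 1)*4" using a b by simp
  have "(2*x + h - 1 - 4*M) mod 4 = 3 mod 4" unfolding eq by (rule mod_mult_self1)
  then have "(2*x + h - 1 - 4*M) mod 4 = 3" by simp
  then show ?thesis using e by blast
qed

lemma Fm_iter_step: assumes "even x" "4 dvd h"
  shows "\<exists>U. (Fm M ^^ L) (x+h) - (Fm M ^^ L) x = h*U \<and> U mod 4 = (if even L then 1 else 3)"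
proof (induction L)
  case 0 then show ?case by (auto intro!: exI[of _ 1])
next
  case (Suc L)
  then obtain U where U: "(Fm M ^^ L) (x+h) - (Fm M ^^ L) x = h*U" "U mod 4 = (if even L then 1 else 3)" by blast
  define a where "a = (Fm M ^^ L) x"
  have ea: "even a" unfolding a_def using assms(1) by (rule Fm_iter_even)
  have "4 dvd h*U" using assms(2) by simp
  then obtain u where u: "Fm M (a + h*U) - Fm M a = h*U*u" "u mod 4 = 3" using Fm_step[OF ea] by blast
  have "(Fm M ^^ Suc L) (x+h) = Fm M (a + h*U)" using U(1) unfolding a_def by (simp add: algebra_simps)
  then have "(Fm M ^^ Suc L) (x+h) - (Fm M ^^ Suc L) x = h*(U*u)" using u(1) unfolding a_def by simp
  moreover have "(U*u) mod 4 = (if even (Suc L) then 1 else 3)"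
  proof -
    have "(U*u) mod 4 = ((U mod 4) * (u mod 4)) mod 4" by (simp add: mod_mult_eq)
    then show ?thesis using U(2) u(2) by auto
  qed
  ultimately show ?case by blast
qed

lemma Fm_iter_ex_shift: assumes "even x" "2 \<le> l" "ex l h"
  shows "ex l ((Fm M ^^ L) (x+h) - (Fm M ^^ L) x)"
proof -
  have "(2::int)^2 dvd 2^l" using assms(2) by (intro le_imp_power_dvd)
  then have "4 dvd h" using ex_dvd[OF assms(3)] by (simp add: dvd_trans)
  then obtain U where U: "(Fm M ^^ L) (x+h) - (Fm M ^^ L) x = h*U" "U mod 4 = (if even L then 1 else 3)"
    using Fm_iter_step[OF assms(1)] by blast
  have "U mod 2 = U mod 4 mod 2" by (simp add: mod_mod_cancel)
  then have "odd U" using U(2) by (cases "even L") (auto simp: odd_iff_mod_2_eq_one)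
  then have "ex 0 U" by (simp add: ex_one)
  then show ?thesis using U(1) ex_mult[OF assms(3)] by fastforce
qed

lemma Fm_double: assumes "even x" "even L" "2 \<le> l" "ex l ((Fm M ^^ L) x - x)"
  shows "ex (Suc l) ((Fm M ^^ (2*L)) x - x)"
proof -
  define h where "h = (Fm M ^^ L) x - x"
  have "(2::int)^2 dvd 2^l" using assms(3) by (intro le_imp_power_dvd)
  then have "4 dvd h" using ex_dvd[OF assms(4)] h_def by (simp add: dvd_trans)
  then obtain U where U: "(Fm M ^^ L) (x+h) - (Fm M ^^ L) x = h*U" "U mod 4 = (if even L then 1 else 3)"
    using Fm_iter_step[OF assms(1)] by blast
  then have U2: "U mod 4 = 1" using assms(2) by simp
  have "(Fm M ^^ (L+L)) x = (Fm M ^^ L) ((Fm M ^^ L) x)" by (simp only: funpow_add comp_apply)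
  then have "(Fm M ^^ (2*L)) x = (Fm M ^^ L) ((Fm M ^^ L) x)" by (simp only: mult_2)
  also have "\<dots> = (Fm M ^^ L) (x+h)" by (simp add: h_def)
  finally have "(Fm M ^^ (2*L)) x - x = ((Fm M ^^ L) (x+h) - (Fm M ^^ L) x) + h" using h_def by simp
  then have "(Fm M ^^ (2*L)) x - x = h * (U + 1)" using U(1) by (simp add: algebra_simps)
  moreover have "ex 1 (U+1)"
  proof -
    have "U = 4 * (U div 4) + 1" using U2 by (metis mult_div_mod_eq)
    then have "U + 1 = 2 * (U div 4 * 2 + 1)" by simp
    then show ?thesis unfolding ex_def by (intro exI[of _ "U div 4 * 2 + 1"]) simp
  qed
  ultimately show ?thesis using ex_mult[OF assms(4)[folded h_def], of 1 "U+1"] by simp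
qed

lemma Fm_pow2: assumes "even x" "2 \<le> e" "ex e ((Fm M ^^ 2) x - x)"
  shows "ex (e+i) ((Fm M ^^ (2^Suc i)) x - x)"
proof (induction i)
  case 0 then show ?case using assms by simp
next
  case (Suc i)
  have "ex (Suc (e+i)) ((Fm M ^^ (2*2^Suc i)) x - x)"
    by (rule Fm_double[OF assms(1) _ _ Suc]) (use assms in auto)
  then show ?case by simp
qed

definition hind :: "(z2 \<Rightarrow> z2) \<Rightarrow> int \<Rightarrow> nat \<Rightarrow> bool" where
  "hind f M l \<longleftrightarrow> (\<forall>r. 0 \<le> r \<and> r < 2^l \<longrightarrow> ind f l r = Fm M r mod 2^l)"

lemma iter_ind: assumes "hind f M l" "0 \<le> r" "r < 2^l"
  shows "(ind f l ^^ i) r = (Fm M ^^ i) r mod 2^l"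
proof (induction i)
  case 0 then show ?case using assms by simp
next
  case (Suc i)
  have "(ind f l ^^ Suc i) r = ind f l ((Fm M ^^ i) r mod 2^l)" using Suc by simp
  also have "\<dots> = Fm M ((Fm M ^^ i) r mod 2^l) mod 2^l"
    using assms(1) unfolding hind_def by simp
  also have "\<dots> = (Fm M ^^ Suc i) r mod 2^l" by (simp add: Fm_mod)
  finally show ?case .
qed

lemma cycle_iter: assumes "is_cycle f l t" shows "(ind f l ^^ i) (t!0) = t!(i mod length t)"
proof (induction i)
  case 0 then show ?case by simp
next
  case (Suc i)
  have len: "0 < length t" using assms unfolding is_cycle_def by auto
  have "(ind f l ^^ Suc i) (t!0) = ind f l (t!(i mod length t))" using Suc by simp
  also have "\<dots> = t!(Suc (i mod length t) mod length t)"
    using assms len unfolding is_cycle_def by auto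
  also have "\<dots> = t!(Suc i mod length t)" by (simp add: mod_Suc_eq)
  finally show ?case .
qed

lemma cycle_range: assumes "is_cycle f l t" "y \<in> set t" shows "0 \<le> y" "y < 2^l"
  using assms unfolding is_cycle_def by auto

lemma cycle_Fm: assumes "is_cycle f l t" "hind f M l"
  shows "(Fm M ^^ i) (t!0) mod 2^l = t!(i mod length t)"
proof -
  have len: "0 < length t" using assms unfolding is_cycle_def by auto
  then have "t!0 \<in> set t" by simp
  then have "0 \<le> t!0" "t!0 < 2^l" using cycle_range[OF assms(1)] by auto
  then show ?thesis using iter_ind[OF assms(2), of "t!0" i] cycle_iter[OF assms(1), of i] by simp
qed

lemma cycle_dvd: assumes "is_cycle f l t" "hind f M l"
  shows "(Fm M ^^ i) (t!0) mod 2^l = t!0 \<longleftrightarrow> length t dvd i"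
proof -
  have len: "0 < length t" and d: "distinct t" using assms unfolding is_cycle_def by auto
  have "(Fm M ^^ i) (t!0) mod 2^l = t!0 \<longleftrightarrow> t!(i mod length t) = t!0"
    using cycle_Fm[OF assms] by simp
  also have "\<dots> \<longleftrightarrow> i mod length t = 0" using d len by (simp add: nth_eq_iff_index_eq)
  finally show ?thesis by auto
qed

lemma cycle_len: assumes "is_cycle f l t" "hind f M l" "1 \<le> s"
  "(Fm M ^^ (2^s)) (t!0) mod 2^l = t!0" "(Fm M ^^ (2^(s-1))) (t!0) mod 2^l \<noteq> t!0"
  shows "length t = 2^s"
proof -
  have d1: "length t dvd 2^s" using assms cycle_dvd by blast
  have d2: "\<not> length t dvd 2^(s-1)" using assms cycle_dvd by blast
  obtain r where r: "r \<le> s" "length t = 2^r" using d1 divides_primepow_nat[of 2] by auto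
  have "r = s"
  proof (rule ccontr)
    assume "r \<noteq> s"
    then have "r \<le> s - 1" using r by simp
    then have "length t dvd 2^(s-1)" using r by (simp add: le_imp_power_dvd)
    then show False using d2 by simp
  qed
  then show ?thesis using r by simp
qed

lemma mod_Suc_mod: "(a::int) mod 2^Suc l mod 2^l = a mod 2^l"
  by (simp add: mod_mod_cancel)

lemma mod_Suc_mod2[simp]: "(a::int) mod (2 * 2^l) mod 2^l = a mod 2^l"
  using mod_Suc_mod by simp

lemma orbit_cycle:
  assumes "hind f M (Suc l)" "0 < L" "(Fm M ^^ L) z mod 2^Suc l = z mod 2^Suc l"
    "distinct (map (\<lambda>i. (Fm M ^^ i) z mod 2^Suc l) [0..<L])"
  shows "is_cycle f (Suc l) (map (\<lambda>i. (Fm M ^^ i) z mod 2^Suc l) [0..<L])"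
  unfolding is_cycle_def
proof (intro conjI allI impI)
  show "map (\<lambda>i. (Fm M ^^ i) z mod 2 ^ Suc l) [0..<L] \<noteq> []" using assms(2) by simp
  show "distinct (map (\<lambda>i. (Fm M ^^ i) z mod 2 ^ Suc l) [0..<L])" by fact
  show "set (map (\<lambda>i. (Fm M ^^ i) z mod 2 ^ Suc l) [0..<L]) \<subseteq> {0..<2 ^ Suc l}" by auto
  fix i assume i: "i < length (map (\<lambda>i. (Fm M ^^ i) z mod 2 ^ Suc l) [0..<L])"
  then have iL: "i < L" by simp
  have "ind f (Suc l) ((Fm M ^^ i) z mod 2 ^ Suc l) = Fm M ((Fm M ^^ i) z mod 2 ^ Suc l) mod 2^Suc l"
    using assms(1) unfolding hind_def by simp
  also have "\<dots> = (Fm M ^^ Suc i) z mod 2^Suc l" by (simp add: Fm_mod)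
  finally have e: "ind f (Suc l) ((Fm M ^^ i) z mod 2 ^ Suc l) = (Fm M ^^ Suc i) z mod 2^Suc l" .
  show "ind f (Suc l) (map (\<lambda>i. (Fm M ^^ i) z mod 2 ^ Suc l) [0..<L] ! i) =
      map (\<lambda>i. (Fm M ^^ i) z mod 2 ^ Suc l) [0..<L] ! (Suc i mod length (map (\<lambda>i. (Fm M ^^ i) z mod 2 ^ Suc l) [0..<L]))"
  proof (cases "Suc i < L")
    case True then show ?thesis using iL e by simp
  next
    case False
    then have "Suc i = L" using iL by simp
    then show ?thesis using iL e assms(3) assms(2) by simp
  qed
qed

lemma liftset_eq: assumes "set t \<subseteq> {0..<2^l}"
  shows "liftset l t = set t \<union> (\<lambda>r. r + 2^l) ` set t"
proof (intro equalityI subsetI)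
  fix y assume y: "y \<in> liftset l t"
  then have y1: "0 \<le> y" "y < 2^Suc l" "y mod 2^l \<in> set t" unfolding liftset_def by auto
  show "y \<in> set t \<union> (\<lambda>r. r + 2^l) ` set t"
  proof (cases "y < 2^l")
    case True then show ?thesis using y1 by simp
  next
    case False
    have "y mod 2^l = (y - 2^l + 2^l) mod 2^l" by simp
    also have "\<dots> = (y - 2^l) mod 2^l" by (rule mod_add_self2)
    also have "\<dots> = y - 2^l" using y1 False by (intro mod_pos_pos_trivial) auto
    finally have "y - 2^l \<in> set t" using y1 by simp
    moreover have "y = (y - 2^l) + 2^l" by simp
    ultimately have "y \<in> (\<lambda>r. r + 2^l) ` set t" by (rule rev_image_eqI)
    then show ?thesis by (rule UnI2)
  qed
next
  fix y assume y: "y \<in> set t \<union> (\<lambda>r. r + 2^l) ` set t"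
  then show "y \<in> liftset l t"
  proof
    assume "y \<in> set t" then show ?thesis using assms unfolding liftset_def by auto
  next
    assume "y \<in> (\<lambda>r. r + 2^l) ` set t"
    then obtain r where r: "r \<in> set t" "y = r + 2^l" by auto
    then have "0 \<le> r" "r < 2^l" using assms by auto
    have "(r + 2^l) mod 2^l = r mod 2^l" by (rule mod_add_self2)
    also have "\<dots> = r" using \<open>0 \<le> r\<close> \<open>r < 2^l\<close> by simp
    finally show ?thesis using r \<open>0 \<le> r\<close> \<open>r < 2^l\<close> unfolding liftset_def by simp
  qed
qed

lemma card_liftset: assumes "set t \<subseteq> {0..<2^l}" "distinct t"
  shows "card (liftset l t) = 2 * length t" "finite (liftset l t)"
proof -
  have disj: "set t \<inter> (\<lambda>r. r + 2^l) ` set t = {}"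
  proof (rule ccontr)
    assume "set t \<inter> (\<lambda>r. r + 2^l) ` set t \<noteq> {}"
    then obtain r where "r \<in> set t" "r + 2^l \<in> set t" by auto
    then have "0 \<le> r" "r + 2^l < 2^l" using assms(1) by auto
    then show False by simp
  qed
  have "inj_on (\<lambda>r::int. r + 2^l) (set t)" by (simp add: inj_on_def)
  then have "card ((\<lambda>r. r + 2^l) ` set t) = length t" using assms(2) by (simp add: card_image distinct_card)
  have "card (set t \<union> (\<lambda>r. r + 2^l) ` set t) = card (set t) + card ((\<lambda>r. r + 2^l) ` set t)"
    using disj by (intro card_Un_disjoint) auto
  also have "\<dots> = 2 * length t" using \<open>card ((\<lambda>r. r + 2^l) ` set t) = length t\<close> assms(2)
    by (simp add: distinct_card)
  finally show "card (liftset l t) = 2 * length t" using liftset_eq[OF assms(1)] by simp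
  show "finite (liftset l t)" using liftset_eq[OF assms(1)] by simp
qed

lemma ex_pow: "ex l ((2::int)^l)" unfolding ex_def by (intro exI[of _ 1]) simp

lemma cycle_proj: assumes "is_cycle f l t" "hind f M l" "i < length t"
  shows "(Fm M ^^ i) (t!0) mod 2^Suc l mod 2^l = t!i"
  using cycle_Fm[OF assms(1,2), of i] assms(3) by (simp add: mod_Suc_mod)

lemma split_lemma:
  assumes cyc: "is_cycle f l t" and h0: "hind f M l" and h1: "hind f M (Suc l)" and l2: "2 \<le> l"
    and ev: "even (t!0)"
    and c1: "2^Suc l dvd (Fm M ^^ length t) (t!0) - t!0"
    and c2: "2^Suc l dvd (Fm M ^^ length t) (t!0 + 2^l) - (t!0 + 2^l)"
  shows "splits f l t"
proof -
  define y where "y = t!0"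
  define L where "L = length t"
  define q :: int where "q = 2^Suc l"
  define t1 where "t1 = map (\<lambda>i. (Fm M ^^ i) y mod q) [0..<L]"
  define t2 where "t2 = map (\<lambda>i. (Fm M ^^ i) (y + 2^l) mod q) [0..<L]"
  have L0: "0 < L" and dt: "distinct t" and rt: "set t \<subseteq> {0..<2^l}"
    using cyc unfolding is_cycle_def L_def by auto
  have p1: "(Fm M ^^ i) y mod q mod 2^l = t!i" if "i < L" for i
    using cycle_proj[OF cyc h0] that unfolding y_def L_def q_def by simp
  have p2: "(Fm M ^^ i) (y + 2^l) mod q mod 2^l = t!i" if "i < L" for i
  proof -
    have "(y + 2^l) mod 2^l = y mod 2^l" by simp
    then have "(Fm M ^^ i) (y + 2^l) mod 2^l = (Fm M ^^ i) y mod 2^l" by (rule Fm_iter_cong)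
    then show ?thesis using p1[OF that] unfolding q_def by (simp add: mod_Suc_mod)
  qed
  have inj: "i = j" if "i < L" "j < L" "t!i = t!j" for i j
    using that dt L_def by (simp add: nth_eq_iff_index_eq)
  have d1: "distinct t1" unfolding t1_def distinct_map
    using p1 inj by (auto simp: inj_on_def) metis
  have d2: "distinct t2" unfolding t2_def distinct_map
    using p2 inj by (auto simp: inj_on_def) metis
  have cy1: "is_cycle f (Suc l) t1" unfolding t1_def q_def
    by (rule orbit_cycle[OF h1 L0 _ d1[unfolded t1_def q_def]])
       (use c1 in \<open>simp add: mod_eq_dvd_iff y_def L_def\<close>)
  have cy2: "is_cycle f (Suc l) t2" unfolding t2_def q_def
    by (rule orbit_cycle[OF h1 L0 _ d2[unfolded t2_def q_def]])
       (use c2 in \<open>simp add: mod_eq_dvd_iff y_def L_def\<close>)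
  have disj: "set t1 \<inter> set t2 = {}"
  proof (rule ccontr)
    assume "set t1 \<inter> set t2 \<noteq> {}"
    then obtain i j where ij: "i < L" "j < L" "(Fm M ^^ i) y mod q = (Fm M ^^ j) (y + 2^l) mod q"
      unfolding t1_def t2_def by auto
    then have "t!i = t!j" using p1 p2 by metis
    then have "i = j" using inj ij by simp
    then have "(Fm M ^^ i) (y + 2^l) mod q = (Fm M ^^ i) y mod q" using ij(3) by simp
    then have "q dvd (Fm M ^^ i) (y + 2^l) - (Fm M ^^ i) y" by (simp add: mod_eq_dvd_iff)
    moreover have "ex l ((Fm M ^^ i) (y + 2^l) - (Fm M ^^ i) y)"
      by (rule Fm_iter_ex_shift[OF _ l2 ex_pow]) (use ev y_def in simp)
    ultimately show False using ex_ndvd[of l _ "Suc l"] q_def by auto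
  qed
  have sub: "set t1 \<union> set t2 \<subseteq> liftset l t"
  proof
    fix x assume "x \<in> set t1 \<union> set t2"
    then obtain i where i: "i < L" "x = (Fm M ^^ i) y mod q \<or> x = (Fm M ^^ i) (y + 2^l) mod q"
      unfolding t1_def t2_def by auto
    then have "x mod 2^l = t!i" using p1 p2 by auto
    moreover have "t!i \<in> set t" using i L_def by simp
    moreover have "0 \<le> x" "x < q" using i q_def by auto
    ultimately show "x \<in> liftset l t" unfolding liftset_def q_def by simp
  qed
  have "card (set t1 \<union> set t2) = card (set t1) + card (set t2)"
    using disj by (intro card_Un_disjoint) auto
  also have "\<dots> = length t1 + length t2" using d1 d2 by (simp add: distinct_card)
  finally have "card (set t1 \<union> set t2) = 2 * L" unfolding t1_def t2_def by simp
  then have "set t1 \<union> set t2 = liftset l t"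
    using card_liftset[OF rt dt] sub L_def by (metis card_subset_eq)
  moreover have "length t1 = length t" "length t2 = length t" unfolding t1_def t2_def L_def by auto
  ultimately show ?thesis unfolding splits_def using cy1 cy2 disj by blast
qed

lemma grow_lemma:
  assumes cyc: "is_cycle f l t" and h0: "hind f M l" and h1: "hind f M (Suc l)" and l2: "2 \<le> l"
    and ev: "even (t!0)"
    and c1: "ex l ((Fm M ^^ length t) (t!0) - t!0)"
    and c2: "2^Suc l dvd (Fm M ^^ (2 * length t)) (t!0) - t!0"
  shows "grows f l t"
proof -
  define y where "y = t!0"
  define L where "L = length t"
  define q :: int where "q = 2^Suc l"
  define t1 where "t1 = map (\<lambda>i. (Fm M ^^ i) y mod q) [0..<2*L]"
  have L0: "0 < L" and dt: "distinct t" and rt: "set t \<subseteq> {0..<2^l}"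
    using cyc unfolding is_cycle_def L_def by auto
  have p1: "(Fm M ^^ i) y mod q mod 2^l = t!(i mod L)" for i
    using cycle_Fm[OF cyc h0, of i] unfolding y_def L_def q_def by (simp add: mod_Suc_mod)
  have inj: "i = j" if "i < L" "j < L" "t!i = t!j" for i j
    using that dt L_def by (simp add: nth_eq_iff_index_eq)
  have neq: "(Fm M ^^ i) y mod q \<noteq> (Fm M ^^ j) y mod q" if ij: "i < j" "j < 2*L" for i j
  proof
    assume eq: "(Fm M ^^ i) y mod q = (Fm M ^^ j) y mod q"
    then have "t!(i mod L) = t!(j mod L)" using p1 by metis
    then have "i mod L = j mod L" using inj L0 by simp
    then have "L dvd j - i" using ij mod_eq_dvd_iff_nat[of i j L] by simp
    then obtain c where c: "j - i = L * c" by auto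
    have "c = 1"
    proof -
      have "0 < j - i" using ij by simp
      then have "0 < L * c" using c by simp
      then have "c \<noteq> 0" by auto
      have "j - i < 2 * L" using ij by simp
      then have "L * c < L * 2" using c by (simp add: mult.commute)
      then have "c < 2" using L0 by simp
      then show ?thesis using \<open>c \<noteq> 0\<close> by simp
    qed
    then have j: "j = i + L" using c ij by simp
    define h where "h = (Fm M ^^ L) y - y"
    have "(Fm M ^^ j) y = (Fm M ^^ i) ((Fm M ^^ L) y)" unfolding j by (simp add: funpow_add)
    also have "\<dots> = (Fm M ^^ i) (y + h)" unfolding h_def by simp
    finally have "(Fm M ^^ i) (y + h) mod q = (Fm M ^^ i) y mod q" using eq by simp
    then have "q dvd (Fm M ^^ i) (y + h) - (Fm M ^^ i) y" by (simp add: mod_eq_dvd_iff)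
    moreover have "ex l ((Fm M ^^ i) (y + h) - (Fm M ^^ i) y)"
      by (rule Fm_iter_ex_shift[OF _ l2]) (use ev y_def c1 h_def L_def in simp_all)
    ultimately show False using ex_ndvd[of l _ "Suc l"] q_def by auto
  qed
  have d1: "distinct t1" unfolding t1_def distinct_map inj_on_def
  proof (intro conjI ballI impI)
    show "distinct [0..<2 * L]" by simp
    fix a b assume ab: "a \<in> set [0..<2 * L]" "b \<in> set [0..<2 * L]"
      "(Fm M ^^ a) y mod q = (Fm M ^^ b) y mod q"
    show "a = b"
    proof (rule ccontr)
      assume "a \<noteq> b"
      then consider "a < b" | "b < a" by linarith
      then show False using neq ab by cases (auto, metis)
    qed
  qed
  have cy1: "is_cycle f (Suc l) t1" unfolding t1_def q_def
    by (rule orbit_cycle[OF h1 _ _ d1[unfolded t1_def q_def]])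
       (use c2 L0 in \<open>simp_all add: mod_eq_dvd_iff y_def L_def\<close>)
  have sub: "set t1 \<subseteq> liftset l t"
  proof
    fix x assume "x \<in> set t1"
    then obtain i where i: "x = (Fm M ^^ i) y mod q" unfolding t1_def by auto
    then have "x mod 2^l = t!(i mod L)" using p1 by auto
    moreover have "t!(i mod L) \<in> set t" using L0 L_def by simp
    moreover have "0 \<le> x" "x < q" using i q_def by auto
    ultimately show "x \<in> liftset l t" unfolding liftset_def q_def by simp
  qed
  have "card (set t1) = length t1" using d1 by (simp add: distinct_card)
  then have "card (set t1) = 2 * L" unfolding t1_def by simp
  then have "set t1 = liftset l t"
    using card_liftset[OF rt dt] sub L_def by (metis card_subset_eq)
  moreover have "length t1 = 2 * length t" unfolding t1_def L_def by auto
  ultimately show ?thesis unfolding grows_def using cy1 by blast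
qed

lemma dvd_mod_eq: assumes "(2::int)^a dvd z - y" "b \<le> a" "0 \<le> y" "y < 2^b"
  shows "z mod 2^b = y"
proof -
  have "(2::int)^b dvd 2^a" using assms(2) by (rule le_imp_power_dvd)
  then have "2^b dvd z - y" using assms(1) by (rule dvd_trans)
  then have "z mod 2^b = y mod 2^b" by (simp add: mod_eq_dvd_iff)
  then show ?thesis using assms(3,4) by simp
qed

lemma ex_mod_neq: assumes "ex a (z - y)" "a < b" "0 \<le> y" "y < 2^b"
  shows "z mod 2^b \<noteq> y"
proof
  assume "z mod 2^b = y"
  then have "z mod 2^b = y mod 2^b" using assms(3,4) by simp
  then have "2^b dvd z - y" by (simp add: mod_eq_dvd_iff)
  then show False using ex_ndvd[OF assms(1,2)] by simp
qed

definition Bprop :: "int \<Rightarrow> nat \<Rightarrow> nat \<Rightarrow> int list \<Rightarrow> bool" where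
  "Bprop M N e \<sigma> \<longleftrightarrow> (\<forall>r. 0 \<le> r \<longrightarrow> r mod 2^N \<in> set \<sigma> \<longrightarrow>
     even r \<and> ex (N-1) (Fm M r - r) \<and> ex e ((Fm M ^^ 2) r - r))"

lemma GT:
  assumes N2: "2 \<le> N"
    and hM: "\<And>l. N \<le> l \<Longrightarrow> \<exists>M. hind f M l \<and> hind f M (Suc l) \<and> Bprop M N (N+k) \<sigma>"
  shows "splits_then_grows f N \<sigma> k"
proof -
  have main: "(l < N + k \<longrightarrow> splits f l t) \<and> (N + k \<le> l \<longrightarrow> grows f l t)"
    if l: "N \<le> l" and cyc: "is_cycle f l t" and ab: "above N \<sigma> l t" for l t
  proof -
    obtain M where h0: "hind f M l" and h1: "hind f M (Suc l)" and B: "Bprop M N (N+k) \<sigma>"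
      using hM[OF l] by blast
    define e where "e = N + k"
    define y where "y = t!0"
    have len0: "0 < length t" using cyc unfolding is_cycle_def by auto
    then have yt: "y \<in> set t" unfolding y_def by simp
    have y0: "0 \<le> y" "y < 2^l" using cycle_range[OF cyc yt] by auto
    have ys: "y mod 2^N \<in> set \<sigma>" using ab yt unfolding above_def by auto
    have By: "even y" "ex (N-1) (Fm M y - y)" "ex e ((Fm M ^^ 2) y - y)"
      using B y0 ys unfolding Bprop_def e_def by auto
    have l2: "2 \<le> l" using N2 l by simp
    have e2: "2 \<le> e" using N2 e_def by simp
    have F1: "(Fm M ^^ 1) y mod 2^l \<noteq> y"
      using ex_mod_neq[OF _ _ y0] By(2) N2 l by simp
    show ?thesis
    proof (intro conjI impI)
      assume le: "l < N + k"
      have "(Fm M ^^ (2^1)) y mod 2^l = y"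
        using dvd_mod_eq[OF ex_dvd[OF By(3)] _ y0] le e_def by simp
      then have L2: "length t = 2"
        using cycle_len[OF cyc h0, of 1] F1 y_def by simp
      have c1: "2^Suc l dvd (Fm M ^^ 2) y - y"
      proof -
        have "(2::int)^Suc l dvd 2^e" using le e_def by (intro le_imp_power_dvd) simp
        then show ?thesis using ex_dvd[OF By(3)] by (rule dvd_trans)
      qed
      have "(2::int)^N dvd 2^l" using l by (rule le_imp_power_dvd)
      then have "(y + 2^l) mod 2^N = y mod 2^N" by (simp add: mod_add_right_eq[symmetric] dvd_imp_mod_0)
      then have "ex e ((Fm M ^^ 2) (y + 2^l) - (y + 2^l))"
        using B y0 ys unfolding Bprop_def e_def by auto
      then have c2: "2^Suc l dvd (Fm M ^^ 2) (y + 2^l) - (y + 2^l)"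
      proof -
        assume a: "ex e ((Fm M ^^ 2) (y + 2^l) - (y + 2^l))"
        have "(2::int)^Suc l dvd 2^e" using le e_def by (intro le_imp_power_dvd) simp
        then show ?thesis using ex_dvd[OF a] by (rule dvd_trans)
      qed
      show "splits f l t"
        by (rule split_lemma[OF cyc h0 h1 l2]) (use By c1 c2 L2 y_def in simp_all)
    next
      assume ge: "N + k \<le> l"
      define i where "i = l - e"
      have li: "l = e + i" using ge e_def i_def by simp
      have P1: "ex l ((Fm M ^^ (2^Suc i)) y - y)" using Fm_pow2[OF By(1) e2 By(3), of i] li by simp
      have P2: "ex (Suc l) ((Fm M ^^ (2^Suc (Suc i))) y - y)"
        using Fm_pow2[OF By(1) e2 By(3), of "Suc i"] li by simp
      have m1: "(Fm M ^^ (2^Suc i)) y mod 2^l = y"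
        using dvd_mod_eq[OF ex_dvd[OF P1] _ y0] by simp
      have m2: "(Fm M ^^ (2^(Suc i - 1))) y mod 2^l \<noteq> y"
      proof (cases i)
        case 0 then show ?thesis using F1 by simp
      next
        case (Suc j)
        have "ex (e + j) ((Fm M ^^ (2^Suc j)) y - y)" by (rule Fm_pow2[OF By(1) e2 By(3)])
        moreover have "e + j < l" using li Suc by simp
        ultimately show ?thesis using ex_mod_neq[OF _ _ y0] Suc by simp
      qed
      have Lt: "length t = 2^Suc i"
        using cycle_len[OF cyc h0, of "Suc i"] m1 m2 y_def by simp
      show "grows f l t"
      proof (rule grow_lemma[OF cyc h0 h1 l2])
        show "even (t!0)" using By y_def by simp
        show "ex l ((Fm M ^^ length t) (t ! 0) - t ! 0)" using P1 Lt y_def by simp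
        have "2 * length t = 2^Suc (Suc i)" using Lt by simp
        then show "2 ^ Suc l dvd (Fm M ^^ (2 * length t)) (t ! 0) - t ! 0"
          using ex_dvd[OF P2] y_def by simp
      qed
    qed
  qed
  show ?thesis unfolding splits_then_grows_def using main by auto
qed

lemma ex_iff: "ex a z \<longleftrightarrow> (2::int)^a dvd z \<and> \<not> 2^Suc a dvd z"
proof
  assume "ex a z" then show "(2::int)^a dvd z \<and> \<not> 2^Suc a dvd z"
    using ex_dvd ex_ndvd[of a z "Suc a"] by auto
next
  assume h: "(2::int)^a dvd z \<and> \<not> 2^Suc a dvd z"
  then obtain u where u: "z = 2^a * u" by auto
  have "odd u"
  proof
    assume "even u"
    then obtain w where "u = 2*w" by auto
    then have "z = 2^Suc a * w" using u by simp
    then show False using h by simp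
  qed
  then show "ex a z" unfolding ex_def using u by blast
qed

lemma ex_add_le: assumes "ex a x" "ex b y" "a < b" shows "ex a (x + y)"
proof -
  have "(2::int)^Suc a dvd 2^b" using assms(3) by (intro le_imp_power_dvd) simp
  then have "2^Suc a dvd y" using ex_dvd[OF assms(2)] by (rule dvd_trans)
  then show ?thesis by (rule ex_add[OF assms(1)])
qed

lemma Fm_fix: "Fm M x - x = x * (x - (4*M+2))"
  unfolding Fm_def by (simp add: algebra_simps)

lemma Fm_two: "(Fm M ^^ 2) x - x = (Fm M x - x) * (x*x - 4*M*(x+1))"
  unfolding Fm_def by (simp add: numeral_2_eq_2 algebra_simps power2_eq_square)

lemma ballG:
  assumes hM: "ex v M" "odd v" and n4: "4 \<le> n" and r: "ex (n-2) r"
  shows "even r \<and> ex (n-1) (Fm M r - r) \<and>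
     ex (if n \<le> v div 2 + 3 then 3*n-5 else n+v+1) ((Fm M ^^ 2) r - r)"
proof -
  obtain w where w: "r = 4 * w"
  proof -
    have "(2::int)^2 dvd 2^(n-2)" using n4 by (intro le_imp_power_dvd) simp
    then have "4 dvd r" using ex_dvd[OF r] by (simp add: dvd_trans)
    then show ?thesis using that by blast
  qed
  have er: "even r" using w by simp
  have rp: "ex 1 (r - (4*M+2))"
  proof -
    have "r - (4*M+2) = 2 * (2*w - 2*M - 1)" using w by simp
    moreover have "odd (2*w - 2*M - 1)" by simp
    ultimately show ?thesis unfolding ex_def by (metis power_one_right)
  qed
  have nn: "n - 2 + 1 = n - 1" using n4 by simp
  have f1: "ex (n-1) (Fm M r - r)"
    using ex_mult[OF r rp] unfolding Fm_fix nn .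
  have q1: "ex (2*(n-2)) (r*r)" using ex_mult[OF r r] by (simp add: mult_2)
  have q2: "ex (v+2) (- (4*M*(r+1)))"
  proof -
    have "ex 2 (4::int)" unfolding ex_def by (intro exI[of _ 1]) simp
    moreover have "ex 0 (r+1)" using er by (simp add: ex_one)
    ultimately have "ex (2 + v + 0) (4*M*(r+1))" using hM(1) by (intro ex_mult) auto
    then show ?thesis by (intro ex_minus) simp
  qed
  have nv: "2*(n-2) \<noteq> v+2" using hM(2) by presburger
  show ?thesis
  proof (cases "n \<le> v div 2 + 3")
    case True
    then have "2*(n-2) < v+2" using nv hM(2) by linarith
    then have "ex (2*(n-2)) (r*r + - (4*M*(r+1)))" by (rule ex_add_le[OF q1 q2])
    then have "ex (n-1 + 2*(n-2)) ((Fm M ^^ 2) r - r)"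
      unfolding Fm_two using ex_mult[OF f1] by simp
    moreover have "n-1 + 2*(n-2) = 3*n-5" using n4 by simp
    ultimately show ?thesis using er f1 True by simp
  next
    case False
    then have "v+2 < 2*(n-2)" using nv hM(2) by linarith
    then have "ex (v+2) (- (4*M*(r+1)) + r*r)" by (rule ex_add_le[OF q2 q1])
    moreover have "- (4*M*(r+1)) + r*r = r*r - 4*M*(r+1)" by simp
    ultimately have q: "ex (v+2) (r*r - 4*M*(r+1))" by simp
    have "ex (n-1 + (v+2)) ((Fm M ^^ 2) r - r)"
      unfolding Fm_two by (rule ex_mult[OF f1 q])
    moreover have "n-1 + (v+2) = n+v+1" using n4 by simp
    ultimately show ?thesis using er f1 False by simp
  qed
qed

lemma ballF:
  assumes hM: "ex v M" "odd v" and n4: "4 \<le> n" and r: "ex (n-2) (r - (4*M+2))"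
  shows "even r \<and> ex (n-1) (Fm M r - r) \<and> ex (n+1) ((Fm M ^^ 2) r - r)"
proof -
  obtain w where w: "r - (4*M+2) = 4 * w"
  proof -
    have "(2::int)^2 dvd 2^(n-2)" using n4 by (intro le_imp_power_dvd) simp
    then have "4 dvd r - (4*M+2)" using ex_dvd[OF r] by (simp add: dvd_trans)
    then show ?thesis using that by blast
  qed
  have er1: "ex 1 r"
  proof -
    have "r = 2 * (2*w + 2*M + 1)" using w by simp
    moreover have "odd (2*w + 2*M + 1)" by simp
    ultimately show ?thesis unfolding ex_def by (metis power_one_right)
  qed
  have er: "even r" using ex_dvd[OF er1] by simp
  have nn: "1 + (n - 2) = n - 1" using n4 by simp
  have f1: "ex (n-1) (Fm M r - r)"
    using ex_mult[OF er1 r] unfolding Fm_fix nn .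
  have q1: "ex 2 (r*r)" using ex_mult[OF er1 er1] by (simp add: numeral_2_eq_2)
  have "even M"
  proof -
    have "(2::int)^1 dvd 2^v" using hM(2) by (intro le_imp_power_dvd) presburger
    then have "(2::int)^1 dvd M" using ex_dvd[OF hM(1)] by (rule dvd_trans)
    then show ?thesis by simp
  qed
  then have "8 dvd - (4*M*(r+1))" by auto
  then have "2^Suc 2 dvd - (4*M*(r+1))" by simp
  then have "ex 2 (r*r + - (4*M*(r+1)))" by (rule ex_add[OF q1])
  then have q: "ex 2 (r*r - 4*M*(r+1))" by simp
  have "ex (n-1 + 2) ((Fm M ^^ 2) r - r)"
    unfolding Fm_two by (rule ex_mult[OF f1 q])
  moreover have "n-1+2 = n+1" using n4 by simp
  ultimately show ?thesis using er f1 by simp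
qed

lemma res_f:
  assumes hf: "\<And>x. f x = x * x + (z2 (-1) - z2 4 * m) * x" and hM: "M mod 2^l = res l m"
  shows "res l (f x) = Fm M (res l x) mod 2^l"
proof -
  have "res l (f x) = (res l x * res l x mod 2^l + (((-1) mod 2^l - (4 mod 2^l) * (M mod 2^l) mod 2^l) mod 2^l) * res l x mod 2^l) mod 2^l"
    unfolding hf by (simp add: res_add res_mult res_diff res_z2 hM)
  also have "\<dots> = Fm M (res l x) mod 2^l" unfolding Fm_def by (simp add: mod_simps algebra_simps)
  finally show ?thesis .
qed

lemma hind_f:
  assumes hf: "\<And>x. f x = x * x + (z2 (-1) - z2 4 * m) * x" and hM: "M mod 2^l = res l m"
  shows "hind f M l"
  unfolding hind_def ind_def
proof (intro allI impI)
  fix r :: int assume r: "0 \<le> r \<and> r < 2^l"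
  have "res l (f (z2 r)) = Fm M (res l (z2 r)) mod 2^l" by (rule res_f[OF hf hM])
  also have "\<dots> = Fm M r mod 2^l" using r by (simp add: res_z2)
  finally show "res l (f (z2 r)) = Fm M r mod 2^l" .
qed

lemma res_0_eq[simp]: "res 0 x = 0"
  using res_props[of 0 x] by simp

lemma v2_props: assumes "m \<noteq> 0"
  shows "res (Suc (v2 m)) m \<noteq> 0" "j \<le> v2 m \<Longrightarrow> res j m = 0"
proof -
  have "\<exists>k. res (Suc k) m \<noteq> 0"
  proof (rule ccontr)
    assume "\<not> (\<exists>k. res (Suc k) m \<noteq> 0)"
    then have "\<forall>n. res n m = res n 0" by (metis not0_implies_Suc res_0_eq res_zero)
    then show False using assms z2_eq_iff by blast
  qed
  then show "res (Suc (v2 m)) m \<noteq> 0" unfolding v2_def by (rule LeastI_ex)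
  assume j: "j \<le> v2 m"
  show "res j m = 0"
  proof (cases j)
    case 0 then show ?thesis by simp
  next
    case (Suc i)
    then have "i < v2 m" using j by simp
    then show ?thesis using not_less_Least Suc unfolding v2_def by blast
  qed
qed

lemma ex_resM: assumes "m \<noteq> 0" "Suc (v2 m) \<le> L" shows "ex (v2 m) (res L m)"
  unfolding ex_iff
proof
  have "res L m mod 2^(v2 m) = res (v2 m) m" using assms(2) by (intro res_le) simp
  also have "\<dots> = 0" using v2_props(2)[OF assms(1)] by simp
  finally show "(2::int)^(v2 m) dvd res L m" by (simp add: dvd_eq_mod_eq_0)
  have "res L m mod 2^Suc (v2 m) = res (Suc (v2 m)) m" using assms(2) by (rule res_le)
  then show "\<not> (2::int)^Suc (v2 m) dvd res L m" using v2_props(1)[OF assms(1)]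
    by (simp add: dvd_eq_mod_eq_0)
qed

lemma int_half_split:
  fixes Z A q :: int
  assumes q: "0 < q" and Z: "0 \<le> Z" "Z < 2*q" and A: "0 \<le> A" "A < 2*q"
  shows "Z mod q = A mod q \<longleftrightarrow> Z = A \<or> Z = (A + q) mod (2*q)"
proof
  assume "Z mod q = A mod q"
  then have "q dvd Z - A" by (simp add: mod_eq_dvd_iff)
  then obtain c where c: "Z - A = q * c" by auto
  have qc: "q * c = Z - A" using c by simp
  have "q * c < q * 2" using qc Z A by linarith
  then have c1: "c < 2" using q by (simp only: mult_less_cancel_left_pos)
  have "q * (-2) < q * c" using qc Z A by linarith
  then have c2: "-2 < c" using q by (simp only: mult_less_cancel_left_pos)
  have "c = -1 \<or> c = 0 \<or> c = 1" using c1 c2 by linarith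
  then show "Z = A \<or> Z = (A + q) mod (2*q)"
  proof (elim disjE)
    assume "c = -1"
    then have "A + q = Z + 2*q" using c by simp
    then have "(A + q) mod (2*q) = Z mod (2*q)" by simp
    then show ?thesis using Z by simp
  next
    assume "c = 0" then show ?thesis using c by simp
  next
    assume "c = 1"
    then have "A + q = Z" using c by simp
    then show ?thesis using Z by simp
  qed
next
  assume "Z = A \<or> Z = (A + q) mod (2*q)"
  then show "Z mod q = A mod q"
  proof
    assume "Z = (A + q) mod (2*q)"
    then have "Z mod q = (A + q) mod (2*q) mod q" by simp
    also have "\<dots> = (A + q) mod q" by (simp add: mod_mod_cancel)
    finally show ?thesis by simp
  qed simp
qed

lemma zball_split: "zball a k = zball a (Suc k) \<union> zball (a + z2 (2^k)) (Suc k)"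
proof -
  have "z \<in> zball a k \<longleftrightarrow> z \<in> zball a (Suc k) \<union> zball (a + z2 (2^k)) (Suc k)" for z
  proof -
    have "z \<in> zball a k \<longleftrightarrow> res (Suc k) z mod 2^k = res (Suc k) a mod 2^k"
      unfolding zball_def by (simp add: res_Suc)
    also have "\<dots> \<longleftrightarrow> res (Suc k) z = res (Suc k) a \<or> res (Suc k) z = (res (Suc k) a + 2^k) mod (2 * 2^k)"
      by (rule int_half_split) (use res_lt[of "Suc k"] in auto)
    also have "\<dots> \<longleftrightarrow> z \<in> zball a (Suc k) \<union> zball (a + z2 (2^k)) (Suc k)"
      unfolding zball_def by (simp add: res_add res_z2 mod_simps)
    finally show ?thesis .
  qed
  then show ?thesis by blast
qed

lemma ex_step: assumes "ex (N-1) (z - X)" "1 \<le> N" shows "z mod 2^N = (X + 2^(N-1)) mod 2^N"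
proof -
  obtain u where u: "odd u" "z - X = 2^(N-1) * u" using assms(1) ex_def by auto
  obtain w where w: "u = 2*w + 1" using u(1) oddE by blast
  have N: "(2::int)^N = 2 * 2^(N-1)" using assms(2) by (metis Suc_diff_le diff_Suc_1 power_Suc)
  have "z = X + 2^(N-1) + w * 2^N" using u(2) w N by (simp add: algebra_simps)
  then show ?thesis by simp
qed

lemma typeII_gen:
  assumes N2: "2 \<le> N" and S: "S = zball x N \<union> zball y N"
    and xy: "res N y = (res N x + 2^(N-1)) mod 2^N"
    and hM: "\<And>l. N \<le> l \<Longrightarrow> \<exists>M. hind f M l \<and> hind f M (Suc l) \<and> Bprop M N (N+k) [res N x, res N y]"
  shows "typeII f S k"
proof -
  define X where "X = res N x"
  define Y where "Y = res N y"
  obtain M where h0: "hind f M N" and B: "Bprop M N (N+k) [X, Y]" using hM[of N] X_def Y_def by auto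
  have exX: "ex (N-1) (Fm M X - X)" using B unfolding Bprop_def X_def by simp
  have exY: "ex (N-1) (Fm M Y - Y)" using B unfolding Bprop_def Y_def by simp
  have N: "(2::int)^N = 2 * 2^(N-1)" using N2 by (metis Suc_diff_le diff_Suc_1 le_trans one_le_numeral power_Suc)
  have iX: "ind f N X = Y" using h0 ex_step[OF exX] N2 unfolding hind_def X_def Y_def xy by simp
  have "ind f N Y = (Y + 2^(N-1)) mod 2^N" using h0 ex_step[OF exY] N2 unfolding hind_def Y_def by simp
  also have "\<dots> = (X + 2^N) mod 2^N" unfolding Y_def xy X_def N by (simp add: mod_simps)
  also have "\<dots> = X" unfolding X_def by simp
  finally have iY: "ind f N Y = X" .
  have XY: "X \<noteq> Y"
  proof
    assume "X = Y"
    then have "(X + 2^(N-1)) mod 2^N = X mod 2^N" unfolding Y_def xy X_def by simp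
    then have "(2::int)^N dvd 2^(N-1)" by (simp add: mod_eq_dvd_iff)
    then have "(2::int)^N \<le> 2^(N-1)" by (rule zdvd_imp_le) simp
    then show False unfolding N by simp
  qed
  have cyc: "is_cycle f N [X, Y]"
    unfolding is_cycle_def
  proof (intro conjI allI impI)
    show "[X, Y] \<noteq> []" by simp
    show "distinct [X, Y]" using XY by simp
    show "set [X, Y] \<subseteq> {0..<2 ^ N}" unfolding X_def Y_def by auto
    fix i assume "i < length [X, Y]"
    then have "i = 0 \<or> i = 1" by auto
    then show "ind f N ([X, Y] ! i) = [X, Y] ! (Suc i mod length [X, Y])"
      using iX iY by auto
  qed
  have "splits_then_grows f N [X, Y] k"
    by (rule GT[OF N2]) (use hM X_def Y_def in auto)
  then show ?thesis unfolding typeII_def S using N2 cyc X_def Y_def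
    by (intro exI[of _ N] exI[of _ x] exI[of _ y] conjI) auto
qed

lemma mod_pow_le: "k \<le> n \<Longrightarrow> (a::int) mod 2^n mod 2^k = a mod 2^k"
  by (simp add: mod_mod_cancel le_imp_power_dvd)

definition vx :: "nat \<Rightarrow> z2 \<Rightarrow> bool" where "vx k y \<longleftrightarrow> res (Suc k) y = 2^k"

lemma zball_shift_iff: "y \<in> zball (a + z2 (2^k)) (Suc k) \<longleftrightarrow> vx k (y - a)"
proof -
  define q :: int where "q = 2^Suc k"
  have k: "(2::int)^k mod q = 2^k" unfolding q_def by simp
  have "y \<in> zball (a + z2 (2^k)) (Suc k) \<longleftrightarrow> res (Suc k) y = (res (Suc k) a + 2^k mod q) mod q"
    unfolding zball_def by (simp add: res_add res_z2 q_def)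
  also have "\<dots> \<longleftrightarrow> (res (Suc k) y - res (Suc k) a) mod q = 2^k"
  proof
    assume h: "res (Suc k) y = (res (Suc k) a + 2^k mod q) mod q"
    have "(res (Suc k) y - res (Suc k) a) mod q = ((res (Suc k) a + 2^k mod q) mod q - res (Suc k) a) mod q"
      by (simp add: h)
    also have "\<dots> = 2^k mod q" by (simp add: mod_simps)
    finally show "(res (Suc k) y - res (Suc k) a) mod q = 2^k" using k by simp
  next
    assume h: "(res (Suc k) y - res (Suc k) a) mod q = 2^k"
    have "res (Suc k) y = res (Suc k) y mod q" unfolding q_def by (rule res_mod[symmetric])
    also have "\<dots> = ((res (Suc k) y - res (Suc k) a) mod q + res (Suc k) a) mod q" by (simp add: mod_simps)
    also have "\<dots> = (res (Suc k) a + 2^k mod q) mod q" using h k by (simp add: add.commute)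
    finally show "res (Suc k) y = (res (Suc k) a + 2^k mod q) mod q" .
  qed
  also have "\<dots> \<longleftrightarrow> vx k (y - a)" unfolding vx_def q_def by (simp add: res_diff)
  finally show ?thesis .
qed

lemma zball_pow_iff: "y \<in> zball (z2 (2^k)) (Suc k) \<longleftrightarrow> vx k y"
  using zball_shift_iff[of y 0 k] by (simp add: z2_eq_iff res_add res_diff res_z2 zero_z2_def vx_def zball_def)

lemma vx_unique: assumes "vx i y" "vx j y" shows "i = j"
proof (rule ccontr)
  have aux: False if "vx i y" "vx j y" "i < j" for i j
  proof -
    have "res (Suc j) y mod 2^Suc i = res (Suc i) y" using that(3) by (intro res_le) simp
    then have "(2::int)^j mod 2^Suc i = 2^i" using that(1,2) unfolding vx_def by simp
    moreover have "(2::int)^Suc i dvd 2^j" using that(3) by (intro le_imp_power_dvd) simp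
    ultimately show False by simp
  qed
  assume "i \<noteq> j"
  then consider "i < j" | "j < i" by linarith
  then show False using aux assms by cases blast+
qed

lemma vx_nz: "vx k y \<Longrightarrow> y \<noteq> 0" unfolding vx_def by auto

lemma vx_res2: assumes "vx k y" "2 \<le> k" shows "res 2 y = 0"
proof -
  have "res (Suc k) y mod 2^2 = res 2 y" using assms(2) by (intro res_le) simp
  moreover have "(2::int)^2 dvd 2^k" using assms(2) by (rule le_imp_power_dvd)
  ultimately show ?thesis using assms(1) unfolding vx_def by simp
qed

lemma vx_exists: assumes "y \<noteq> 0" shows "vx (v2 y) y"
proof -
  define k where "k = v2 y"
  have a: "res (Suc k) y \<noteq> 0" using v2_props(1)[OF assms] k_def by simp
  have "res (Suc k) y mod 2^k = res k y" by (rule res_Suc)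
  also have "\<dots> = 0" using v2_props(2)[OF assms] k_def by simp
  finally have "2^k dvd res (Suc k) y" by (simp add: dvd_eq_mod_eq_0)
  then obtain c where c: "res (Suc k) y = 2^k * c" by auto
  have "0 < 2^k * c" using a res_ge0[of "Suc k" y] c by linarith
  then have "0 < c" by (simp add: zero_less_mult_iff)
  have "2^k * c < 2^k * 2" using res_lt[of "Suc k" y] c by (simp add: mult.commute)
  then have "c < 2" by simp
  then have "c = 1" using \<open>0 < c\<close> by simp
  then show ?thesis unfolding vx_def k_def[symmetric] using c by simp
qed

lemma vx_ge2: assumes "y \<noteq> 0" "res 2 y = 0" shows "2 \<le> v2 y"
proof (rule ccontr)
  assume "\<not> 2 \<le> v2 y"
  then have "Suc (v2 y) \<le> 2" by simp
  then have "res 2 y mod 2^Suc (v2 y) = res (Suc (v2 y)) y" by (rule res_le)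
  then show False using assms v2_props(1)[OF assms(1)] by simp
qed

lemma res_sub_eq: assumes "res n (x - y) = 0" shows "res n x = res n y"
proof -
  have "(res n x - res n y) mod 2^n = 0" using assms res_diff by metis
  then have "2^n dvd res n x - res n y" by (simp add: dvd_eq_mod_eq_0)
  then have "res n x mod 2^n = res n y mod 2^n" by (simp only: mod_eq_dvd_iff)
  then show "res n x = res n y" by simp
qed

lemma res_sub0: assumes "\<forall>n. res n (x - y) = 0" shows "x = y"
  unfolding z2_eq_iff
proof
  fix n
  have "(res n x - res n y) mod 2^n = 0" using assms res_diff by metis
  then have "2^n dvd res n x - res n y" by (simp add: dvd_eq_mod_eq_0)
  then have "res n x mod 2^n = res n y mod 2^n" by (simp only: mod_eq_dvd_iff)
  then show "res n x = res n y" by simp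
qed

lemma res1_of_res2: "res 1 y = res 2 y mod 2"
  using res_le[of 1 2 y] by simp

lemma member_lemma: assumes n: "1 \<le> n" and r: "r mod 2^n \<in> set [res n x, res n (x + z2 (2^(n-1)))]"
  shows "r mod 2^(n-1) = res (n-1) x"
proof -
  have "r mod 2^(n-1) = r mod 2^n mod 2^(n-1)" by (simp add: mod_pow_le)
  moreover have "res n x mod 2^(n-1) = res (n-1) x" by (rule res_le) simp
  moreover have "res n (x + z2 (2^(n-1))) mod 2^(n-1) = res (n-1) x"
  proof -
    have "res n (x + z2 (2^(n-1))) mod 2^(n-1) = res (n-1) (x + z2 (2^(n-1)))" by (rule res_le) simp
    also have "\<dots> = res (n-1) x" by (simp add: res_add res_z2)
    finally show ?thesis .
  qed
  ultimately show ?thesis using r by auto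
qed

lemma typeII_ball:
  assumes hf: "\<And>x. f x = x * x + (z2 (-1) - z2 4 * m) * x" and hm0: "m \<noteq> 0" and n4: "4 \<le> n"
    and hB: "\<And>M r. ex (v2 m) M \<Longrightarrow> (\<And>j. j \<le> n \<Longrightarrow> M mod 2^j = res j m) \<Longrightarrow> 0 \<le> r \<Longrightarrow>
        r mod 2^(n-1) = res (n-1) x \<Longrightarrow>
        even r \<and> ex (n-1) (Fm M r - r) \<and> ex (n+k) ((Fm M ^^ 2) r - r)"
  shows "typeII f (zball x (n-1)) k"
proof -
  have nn: "Suc (n-1) = n" using n4 by simp
  have S: "zball x (n-1) = zball x n \<union> zball (x + z2 (2^(n-1))) n"
    using zball_split[of x "n-1"] unfolding nn .
  show ?thesis
  proof (rule typeII_gen[OF _ S])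
    show "2 \<le> n" using n4 by simp
    show "res n (x + z2 (2 ^ (n - 1))) = (res n x + 2 ^ (n - 1)) mod 2 ^ n"
      by (simp add: res_add res_z2 mod_simps)
    fix l assume l: "n \<le> l"
    define M where "M = res (l + v2 m + 2) m"
    have Mj: "M mod 2^j = res j m" if "j \<le> l + v2 m + 2" for j
      unfolding M_def using that by (rule res_le)
    have exM: "ex (v2 m) M" unfolding M_def by (rule ex_resM[OF hm0]) simp
    have h0: "hind f M l" by (rule hind_f[OF hf Mj]) simp
    have h1: "hind f M (Suc l)" by (rule hind_f[OF hf Mj]) simp
    have B: "Bprop M n (n+k) [res n x, res n (x + z2 (2 ^ (n - 1)))]"
      unfolding Bprop_def
    proof (intro allI impI)
      fix r :: int assume r0: "0 \<le> r" and rs: "r mod 2^n \<in> set [res n x, res n (x + z2 (2 ^ (n - 1)))]"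
      have "r mod 2^(n-1) = res (n-1) x" by (rule member_lemma[OF _ rs]) (use n4 in simp)
      then show "even r \<and> ex (n - 1) (Fm M r - r) \<and> ex (n + k) ((Fm M ^^ 2) r - r)"
        using hB[OF exM _ r0] Mj l by simp
    qed
    show "\<exists>M. hind f M l \<and> hind f M (Suc l) \<and> Bprop M n (n + k) [res n x, res n (x + z2 (2 ^ (n - 1)))]"
      using h0 h1 B by blast
  qed
qed

theorem theorem6p4:
  fixes m :: z2 and f :: "z2 \<Rightarrow> z2"
  assumes hm0: "m \<noteq> 0"
    and hodd: "odd (v2 m)"
    and hf: "\<And>x. f x = x * x + (z2 (-1) - z2 4 * m) * x"
  defines "p \<equiv> z2 4 * m + z2 2"
  defines "F1 \<equiv> \<lambda>n::nat. zball (p + z2 (2 ^ (n - 2))) (n - 1)"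
  defines "G \<equiv> \<lambda>n::nat. zball (z2 (2 ^ (n - 2))) (n - 1)"
  defines "E1 \<equiv> (\<Union>n\<in>{4..}. F1 n)"
  defines "E2 \<equiv> (\<Union>n\<in>{4..v2 m div 2 + 3}. G n)"
  defines "E3 \<equiv> (\<Union>n\<in>{v2 m div 2 + 3<..}. G n)"
  shows "{x. f x = x} = {0, p}
    \<and> (\<forall>x. res 1 x = 1 \<longrightarrow> res 1 (f x) = 0)
    \<and> {x. res 1 x = 0} = {0, p} \<union> E1 \<union> E2 \<union> E3
    \<and> 0 \<noteq> p
    \<and> disjnt {0, p} E1 \<and> disjnt {0, p} E2 \<and> disjnt {0, p} E3
    \<and> disjnt E1 E2 \<and> disjnt E1 E3 \<and> disjnt E2 E3
    \<and> (\<forall>i\<ge>4. \<forall>j\<ge>4. i \<noteq> j \<longrightarrow> disjnt (F1 i) (F1 j))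
    \<and> (\<forall>i\<ge>4. \<forall>j\<ge>4. i \<noteq> j \<longrightarrow> disjnt (G i) (G j))
    \<and> (\<forall>n\<ge>4. typeII f (F1 n) 1)
    \<and> (\<forall>n. 4 \<le> n \<and> n \<le> v2 m div 2 + 3 \<longrightarrow> typeII f (G n) (2 * n - 5))
    \<and> (\<forall>n. v2 m div 2 + 3 < n \<longrightarrow> typeII f (G n) (v2 m + 1))"
proof -
  define v where "v = v2 m"
  have vodd: "odd v" using hodd v_def by simp
  have resp: "res j p = (4*M + 2) mod 2^j" if "M mod 2^j = res j m" for j M
    unfolding p_def by (simp add: res_add res_mult res_z2 that[symmetric] mod_simps)
  have resp2: "res 2 p = 2"
  proof -
    have "res 2 p = (4 * res 2 m + 2) mod 2^2" by (rule resp, rule res_mod)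
    also have "\<dots> = ((4 * res 2 m) mod 4 + 2) mod 4" by (simp add: mod_simps)
    finally show ?thesis by simp
  qed
  have pp0: "p - p = 0" unfolding z2_eq_iff by (simp add: res_diff)
  have hG: "y \<in> G n \<longleftrightarrow> vx (n-2) y" if "2 \<le> n" for n y
  proof -
    have "n - 1 = Suc (n-2)" using that by simp
    then show ?thesis unfolding G_def using zball_pow_iff by simp
  qed
  have hF: "y \<in> F1 n \<longleftrightarrow> vx (n-2) (y - p)" if "2 \<le> n" for n y
  proof -
    have "n - 1 = Suc (n-2)" using that by simp
    then show ?thesis unfolding F1_def using zball_shift_iff by simp
  qed
  have r2G: "res 2 y = 0" if "y \<in> G n" "4 \<le> n" for n y
    using hG[of n y] that vx_res2[of "n-2" y] by simp
  have nzG: "y \<noteq> 0" if "y \<in> G n" "4 \<le> n" for n y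
    using hG[of n y] that vx_nz by auto
  have r2F: "res 2 y = 2" if "y \<in> F1 n" "4 \<le> n" for n y
  proof -
    have "res 2 (y - p) = 0" using hF[of n y] that vx_res2[of "n-2" "y - p"] by simp
    then show ?thesis using res_sub_eq resp2 by metis
  qed
  have pF: "p \<notin> F1 n" if "4 \<le> n" for n
    using hF[of n p] that pp0 vx_nz by auto
  have r10: "res 1 y = 0" if "res 2 y = 0 \<or> res 2 y = 2" for y
    using that res1_of_res2[of y] by auto
  have fix1: "f x = x \<longleftrightarrow> x = 0 \<or> x = p" for x
  proof
    assume fx: "f x = x"
    show "x = 0 \<or> x = p"
    proof (rule ccontr)
      assume "\<not> (x = 0 \<or> x = p)"
      then have x0: "x \<noteq> 0" and xp: "x \<noteq> p" by auto
      have d0: "x - p \<noteq> 0"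
      proof
        assume "x - p = 0"
        then have "\<forall>n. res n (x - p) = 0" by simp
        then show False using res_sub0 xp by blast
      qed
      define a where "a = v2 x"
      define b where "b = v2 (x - p)"
      have va: "vx a x" using vx_exists[OF x0] a_def by simp
      have vb: "vx b (x - p)" using vx_exists[OF d0] b_def by simp
      define n where "n = a + b + 1"
      define M where "M = res n m"
      define X where "X = res n x"
      have "X = res n (f x)" using fx X_def by simp
      also have "\<dots> = Fm M X mod 2^n" unfolding X_def by (rule res_f[OF hf]) (simp add: M_def)
      finally have "Fm M X mod 2^n = X mod 2^n" unfolding X_def by simp
      then have dv: "2^n dvd X * (X - (4*M+2))" unfolding Fm_fix[symmetric] by (simp add: mod_eq_dvd_iff)
      have exa: "ex a X"
      proof (rule ex_mod)
        have "X mod 2^Suc a = res (Suc a) x" unfolding X_def by (rule res_le) (simp add: n_def)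
        then show "X mod 2^Suc a = 2^a" using va unfolding vx_def by simp
      qed
      have exb: "ex b (X - (4*M+2))"
      proof (rule ex_mod)
        have "res n (x - p) mod 2^Suc b = res (Suc b) (x - p)" by (rule res_le) (simp add: n_def)
        moreover have "res n (x - p) = (X - (4*M+2) mod 2^n) mod 2^n"
          unfolding X_def using resp[of M n] by (simp add: res_diff M_def)
        moreover have "(X - (4*M+2) mod 2^n) mod 2^n mod 2^Suc b = (X - (4*M+2)) mod 2^Suc b"
        proof -
          have "(X - (4*M+2) mod 2^n) mod 2^n mod 2^Suc b = (X - (4*M+2) mod 2^n) mod 2^Suc b"
            by (rule mod_pow_le) (simp add: n_def)
          also have "\<dots> = (X mod 2^Suc b - (4*M+2) mod 2^n mod 2^Suc b) mod 2^Suc b"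
            by (simp add: mod_diff_eq)
          also have "\<dots> = (X mod 2^Suc b - (4*M+2) mod 2^Suc b) mod 2^Suc b"
            using mod_pow_le[of "Suc b" n "4*M+2"] by (simp only: n_def)
          also have "\<dots> = (X - (4*M+2)) mod 2^Suc b" by (simp add: mod_diff_eq)
          finally show ?thesis .
        qed
        ultimately show "(X - (4*M+2)) mod 2^Suc b = 2^b" using vb unfolding vx_def by simp
      qed
      have "ex (a+b) (X * (X - (4*M+2)))" by (rule ex_mult[OF exa exb])
      then show False using ex_ndvd[of "a+b" _ n] dv n_def by simp
    qed
  next
    assume "x = 0 \<or> x = p"
    then show "f x = x"
    proof
      assume x: "x = 0"
      show ?thesis unfolding z2_eq_iff
      proof
        fix n
        have "res n (f x) = Fm (res n m) (res n x) mod 2^n" by (rule res_f[OF hf]) simp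
        then show "res n (f x) = res n x" using x by (simp add: Fm_def)
      qed
    next
      assume x: "x = p"
      show ?thesis unfolding z2_eq_iff
      proof
        fix n
        define M where "M = res n m"
        have "res n (f x) = Fm M (res n x) mod 2^n" by (rule res_f[OF hf]) (simp add: M_def)
        also have "\<dots> = Fm M ((4*M+2) mod 2^n) mod 2^n" using x resp[of M n] by (simp add: M_def)
        also have "\<dots> = Fm M (4*M+2) mod 2^n" by (rule Fm_mod)
        also have "\<dots> = (4*M+2) mod 2^n" by (simp add: Fm_def algebra_simps)
        also have "\<dots> = res n x" using x resp[of M n] by (simp add: M_def)
        finally show "res n (f x) = res n x" .
      qed
    qed
  qed
  have P1: "{x. f x = x} = {0, p}" using fix1 by auto
  have P2: "\<forall>x. res 1 x = 1 \<longrightarrow> res 1 (f x) = 0"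
  proof (intro allI impI)
    fix x assume x: "res 1 x = 1"
    have "res 1 (f x) = Fm (res 1 m) (res 1 x) mod 2^1" by (rule res_f[OF hf], rule res_mod)
    also have "\<dots> = (- 4 * res 1 m) mod 2" using x by (simp add: Fm_def)
    also have "\<dots> = 0" by simp
    finally show "res 1 (f x) = 0" .
  qed
  have P3: "{x. res 1 x = 0} = {0, p} \<union> E1 \<union> E2 \<union> E3"
  proof (intro equalityI subsetI)
    fix x assume "x \<in> {x. res 1 x = 0}"
    then have x1: "res 1 x = 0" by simp
    show "x \<in> {0, p} \<union> E1 \<union> E2 \<union> E3"
    proof (cases "x = 0 \<or> x = p")
      case True then show ?thesis by auto
    next
      case False
      then have x0: "x \<noteq> 0" and xp: "x \<noteq> p" by auto
      show ?thesis
      proof (cases "res 2 x = 0")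
        case True
        define k where "k = v2 x"
        have k2: "2 \<le> k" using vx_ge2[OF x0 True] k_def by simp
        have "x \<in> G (k+2)" using hG[of "k+2" x] vx_exists[OF x0] k_def by simp
        then show ?thesis unfolding E2_def E3_def using k2 v_def
          by (cases "k + 2 \<le> v2 m div 2 + 3") auto
      next
        case False
        have "res 2 x mod 2 = 0" using x1 res1_of_res2[of x] by simp
        moreover have "0 \<le> res 2 x" "res 2 x < 4" using res_lt[of 2 x] by auto
        ultimately have r2: "res 2 x = 2" using False by presburger
        have d0: "x - p \<noteq> 0"
        proof
          assume "x - p = 0"
          then have "\<forall>n. res n (x - p) = 0" by simp
          then show False using res_sub0 xp by blast
        qed
        have "res 2 (x - p) = 0" by (simp add: res_diff r2 resp2)
        then have k2: "2 \<le> v2 (x - p)" using vx_ge2[OF d0] by simp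
        have "x \<in> F1 (v2 (x - p) + 2)" using hF[of "v2 (x - p) + 2" x] vx_exists[OF d0] by simp
        then show ?thesis unfolding E1_def using k2 by auto
      qed
    qed
  next
    fix x assume "x \<in> {0, p} \<union> E1 \<union> E2 \<union> E3"
    then consider "x = 0" | "x = p" | "x \<in> E1" | "x \<in> E2 \<or> x \<in> E3" by auto
    then show "x \<in> {x. res 1 x = 0}"
    proof cases
      case 1 then show ?thesis by simp
    next
      case 2 then show ?thesis using r10 resp2 by simp
    next
      case 3 then show ?thesis using r10 r2F unfolding E1_def by auto
    next
      case 4 then show ?thesis using r10 r2G unfolding E2_def E3_def by auto
    qed
  qed
  have P4: "0 \<noteq> p" using resp2 by auto
  have FFd: "\<forall>i\<ge>4. \<forall>j\<ge>4. i \<noteq> j \<longrightarrow> disjnt (F1 i) (F1 j)"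
  proof (intro allI impI)
    fix i j :: nat assume ij: "4 \<le> i" "4 \<le> j" "i \<noteq> j"
    show "disjnt (F1 i) (F1 j)" unfolding disjnt_def
    proof (rule ccontr)
      assume "F1 i \<inter> F1 j \<noteq> {}"
      then obtain y where "y \<in> F1 i" "y \<in> F1 j" by auto
      then have "vx (i-2) (y - p)" "vx (j-2) (y - p)" using hF ij by auto
      then have "i - 2 = j - 2" by (rule vx_unique)
      then show False using ij by simp
    qed
  qed
  have GGd: "\<forall>i\<ge>4. \<forall>j\<ge>4. i \<noteq> j \<longrightarrow> disjnt (G i) (G j)"
  proof (intro allI impI)
    fix i j :: nat assume ij: "4 \<le> i" "4 \<le> j" "i \<noteq> j"
    show "disjnt (G i) (G j)" unfolding disjnt_def
    proof (rule ccontr)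
      assume "G i \<inter> G j \<noteq> {}"
      then obtain y where "y \<in> G i" "y \<in> G j" by auto
      then have "vx (i-2) y" "vx (j-2) y" using hG ij by auto
      then have "i - 2 = j - 2" by (rule vx_unique)
      then show False using ij by simp
    qed
  qed
  have D1: "disjnt {0, p} E1" unfolding disjnt_def E1_def using r2F pF by fastforce
  have D2: "disjnt {0, p} E2" unfolding disjnt_def E2_def using nzG r2G resp2 by fastforce
  have D3: "disjnt {0, p} E3" unfolding disjnt_def E3_def using nzG r2G resp2 by fastforce
  have D12: "disjnt E1 E2" unfolding disjnt_def E1_def E2_def using r2G r2F by fastforce
  have D13: "disjnt E1 E3" unfolding disjnt_def E1_def E3_def using r2G r2F by fastforce
  have D23: "disjnt E2 E3" unfolding disjnt_def E2_def E3_def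
  proof (rule ccontr)
    assume "(\<Union>n\<in>{4..v2 m div 2 + 3}. G n) \<inter> (\<Union>n\<in>{v2 m div 2 + 3<..}. G n) \<noteq> {}"
    then obtain i j y where ij: "i \<in> {4..v2 m div 2 + 3}" "j \<in> {v2 m div 2 + 3<..}" and y: "y \<in> G i" "y \<in> G j" by blast
    then have "4 \<le> i" "4 \<le> j" "i \<noteq> j" by auto
    then have "G i \<inter> G j = {}" using GGd unfolding disjnt_def by blast
    then show False using y by blast
  qed
  have T1: "\<forall>n\<ge>4. typeII f (F1 n) 1"
  proof (intro allI impI)
    fix n :: nat assume n4: "4 \<le> n"
    show "typeII f (F1 n) 1" unfolding F1_def
    proof (rule typeII_ball[OF hf hm0 n4])
      fix M r assume exM: "ex (v2 m) M" and Mj: "\<And>j. j \<le> n \<Longrightarrow> M mod 2^j = res j m" and r0: "0 \<le> r"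
        and r: "r mod 2^(n-1) = res (n-1) (p + z2 (2^(n-2)))"
      define q :: int where "q = 2^(n-1)"
      have "res (n-1) (p + z2 (2^(n-2))) = ((4*M+2) mod q + 2^(n-2) mod q) mod q"
        unfolding q_def using resp[of M "n-1"] Mj[of "n-1"] by (simp add: res_add res_z2)
      then have r': "r mod q = ((4*M+2) + 2^(n-2)) mod q" using r q_def by (simp add: mod_simps)
      have "(r - (4*M+2)) mod q = (r mod q - (4*M+2)) mod q" by (simp add: mod_simps)
      also have "\<dots> = ((4*M+2) + 2^(n-2) - (4*M+2)) mod q" unfolding r' by (simp add: mod_simps)
      also have "\<dots> = 2^(n-2)" unfolding q_def using n4 by simp
      finally have "(r - (4*M+2)) mod 2^Suc (n-2) = 2^(n-2)" unfolding q_def using n4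
        by (simp add: Suc_diff_Suc numeral_2_eq_2)
      then have "ex (n-2) (r - (4*M+2))" by (rule ex_mod)
      then show "even r \<and> ex (n-1) (Fm M r - r) \<and> ex (n+1) ((Fm M ^^ 2) r - r)"
        by (rule ballF[OF exM hodd n4])
    qed
  qed
  have Gball: "ex (n-2) r" if "4 \<le> n" "r mod 2^(n-1) = res (n-1) (z2 (2^(n-2)))" for n r
  proof (rule ex_mod)
    have "res (n-1) (z2 (2^(n-2))) = 2^(n-2)" using that(1) by (simp add: res_z2)
    then show "r mod 2^Suc (n-2) = 2^(n-2)" using that by (simp add: Suc_diff_Suc numeral_2_eq_2)
  qed
  have T2: "\<forall>n. 4 \<le> n \<and> n \<le> v2 m div 2 + 3 \<longrightarrow> typeII f (G n) (2 * n - 5)"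
  proof (intro allI impI)
    fix n :: nat assume n: "4 \<le> n \<and> n \<le> v2 m div 2 + 3"
    then have n4: "4 \<le> n" by simp
    show "typeII f (G n) (2 * n - 5)" unfolding G_def
    proof (rule typeII_ball[OF hf hm0 n4])
      fix M r assume exM: "ex (v2 m) M" and r0: "0 \<le> r"
        and r: "r mod 2^(n-1) = res (n-1) (z2 (2^(n-2)))"
      have "ex (n-2) r" by (rule Gball[OF n4 r])
      then have "even r \<and> ex (n-1) (Fm M r - r) \<and> ex (3*n-5) ((Fm M ^^ 2) r - r)"
        using ballG[OF exM hodd n4] n by simp
      moreover have "n + (2*n-5) = 3*n-5" using n4 by simp
      ultimately show "even r \<and> ex (n-1) (Fm M r - r) \<and> ex (n + (2*n-5)) ((Fm M ^^ 2) r - r)" by simp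
    qed
  qed
  have T3: "\<forall>n. v2 m div 2 + 3 < n \<longrightarrow> typeII f (G n) (v2 m + 1)"
  proof (intro allI impI)
    fix n :: nat assume n: "v2 m div 2 + 3 < n"
    then have n4: "4 \<le> n" by simp
    show "typeII f (G n) (v2 m + 1)" unfolding G_def
    proof (rule typeII_ball[OF hf hm0 n4])
      fix M r assume exM: "ex (v2 m) M" and r0: "0 \<le> r"
        and r: "r mod 2^(n-1) = res (n-1) (z2 (2^(n-2)))"
      have "ex (n-2) r" by (rule Gball[OF n4 r])
      then have "even r \<and> ex (n-1) (Fm M r - r) \<and> ex (n + v2 m + 1) ((Fm M ^^ 2) r - r)"
        using ballG[OF exM hodd n4] n by simp
      then show "even r \<and> ex (n-1) (Fm M r - r) \<and> ex (n + (v2 m + 1)) ((Fm M ^^ 2) r - r)"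
        by (simp add: add.assoc)
    qed
  qed
  show ?thesis using P1 P2 P3 P4 D1 D2 D3 D12 D13 D23 FFd GGd T1 T2 T3 by blast
qed

end
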